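(* Let $\alpha\ge1$. If all valuation functions are symmetric submodular and every item cost function $c_j$ is non-decreasing and $\alpha$-average-decreasing, then IACSM is $\alpha$-budget-balanced: its output $(A,p)$ satisfies $\sum_{j\in M}c_j(T_j)\le\sum_{i\in N}p_i\le\alpha\sum_{j\in M}c_j(T_j)$, where $T_j=\{i: j\in A_i\}$.
   Context: Players $N=\{1,\dots,n\}$, items $M=\{1,\dots,m\}$, non-decreasing valuations $v_i:2^M\to\mathbb{R}_{\ge0}$; symmetric: $f(S)=f(T)$ whenever $|S|=|T|$; submodular: $f(S\cup\{x\})-f(S)\ge f(T\cup\{x\})-f(T)$ for $S\subseteq T$, $x\notin T$. A cost function $c:2^N\to\mathbb{R}_{\ge0}$ is $\alpha$-average-decreasing if $\alpha\frac{c(S)}{|S|}\ge\frac{c(T)}{|T|}$ for all nonempty $S\subseteq T\subseteq N$. Mechanism IACSM (input: declared valuations $b$): maintain active set $X=N$, sets $T_j=N$ and cost shares $\chi_j=c_j(N)/n$ for all items $j$. While $X\neq\emptyset$: (1) every $i\in X$ computes $A_i\in\arg\max_{S\subseteq M}\{b_i(S)-\sum_{j\in S}\chi_j\}$, choosing among maximizers one of maximum cardinality $k$, and among those the $k$ items with smallest current $\chi_j$ (item ties by index); (2) choose $i^*\in X$ with $|A_{i^*}|$ minimum (ties by smallest index); (3) assign $A_{i^*}$ to $i^*$ permanently and remove $i^*$ from $X$; (4) for every item $j\notin A_{i^*}$ set $T_j:=T_j\setminus\{i^*\}$ and, if $T_j\ne\emptyset$, set $\chi_j:=\max\{\chi_j,c_j(T_j)/|T_j|\}$.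 Output the assigned bundles and payments $p_i=\sum_{j\in A_i}\chi_j$ with final cost shares. *)

theory Defs
  imports Complex_Main
begin

text \<open>Declared valuations b :: nat => nat set => real (player index, bundle),
  item cost functions c :: nat => nat set => real (item index, set of players).\<close>

definition players :: "nat \<Rightarrow> nat set" where "players n = {1..n}"
definition items :: "nat \<Rightarrow> nat set" where "items m = {1..m}"

definition nondecreasing_on :: "'a set \<Rightarrow> ('a set \<Rightarrow> real) \<Rightarrow> bool" where
  "nondecreasing_on U f \<longleftrightarrow> (\<forall>S T. S \<subseteq> T \<and> T \<subseteq> U \<longrightarrow> f S \<le> f T)"

definition symmetric_on :: "'a set \<Rightarrow> ('a set \<Rightarrow> real) \<Rightarrow> bool" where
  "symmetric_on U f \<longleftrightarrow> (\<forall>S T. S \<subseteq> U \<and> T \<subseteq> U \<and> card S = card T \<longrightarrow> f S = f T)"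

definition submodular_on :: "'a set \<Rightarrow> ('a set \<Rightarrow> real) \<Rightarrow> bool" where
  "submodular_on U f \<longleftrightarrow> (\<forall>S T x. S \<subseteq> T \<and> T \<subseteq> U \<and> x \<in> U \<and> x \<notin> T \<longrightarrow>
      f (insert x S) - f S \<ge> f (insert x T) - f T)"

definition avg_decreasing_on :: "real \<Rightarrow> 'a set \<Rightarrow> ('a set \<Rightarrow> real) \<Rightarrow> bool" where
  "avg_decreasing_on \<alpha> U c \<longleftrightarrow> (\<forall>S T. S \<noteq> {} \<and> S \<subseteq> T \<and> T \<subseteq> U \<longrightarrow>
      \<alpha> * (c S / real (card S)) \<ge> c T / real (card T))"

text \<open>State of IACSM: active set X, allocation A, sets T_j, cost shares chi_j.\<close>
record state =
  act :: "nat set"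
  alloc :: "nat \<Rightarrow> nat set"
  tset :: "nat \<Rightarrow> nat set"
  share :: "nat \<Rightarrow> real"

definition utility :: "(nat set \<Rightarrow> real) \<Rightarrow> (nat \<Rightarrow> real) \<Rightarrow> nat set \<Rightarrow> real" where
  "utility v chi S = v S - (\<Sum>j\<in>S. chi j)"

definition is_maximizer :: "nat set \<Rightarrow> (nat set \<Rightarrow> real) \<Rightarrow> (nat \<Rightarrow> real) \<Rightarrow> nat set \<Rightarrow> bool" where
  "is_maximizer M v chi S \<longleftrightarrow> S \<subseteq> M \<and> (\<forall>S'. S' \<subseteq> M \<longrightarrow> utility v chi S' \<le> utility v chi S)"

definition demand_size :: "nat set \<Rightarrow> (nat set \<Rightarrow> real) \<Rightarrow> (nat \<Rightarrow> real) \<Rightarrow> nat" where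
  "demand_size M v chi = Max (card ` {S. is_maximizer M v chi S})"

definition item_less :: "(nat \<Rightarrow> real) \<Rightarrow> nat \<Rightarrow> nat \<Rightarrow> bool" where
  "item_less chi j' j \<longleftrightarrow> chi j' < chi j \<or> (chi j' = chi j \<and> j' < j)"

definition cheapest :: "nat set \<Rightarrow> (nat \<Rightarrow> real) \<Rightarrow> nat \<Rightarrow> nat set" where
  "cheapest M chi k = {j \<in> M. card {j' \<in> M. item_less chi j' j} < k}"

definition demand :: "nat set \<Rightarrow> (nat \<Rightarrow> nat set \<Rightarrow> real) \<Rightarrow> (nat \<Rightarrow> real) \<Rightarrow> nat \<Rightarrow> nat set" where
  "demand M b chi i = cheapest M chi (demand_size M (b i) chi)"

definition selected :: "nat set \<Rightarrow> (nat \<Rightarrow> nat set \<Rightarrow> real) \<Rightarrow> state \<Rightarrow> nat" where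
  "selected M b s = (LEAST i. i \<in> act s \<and>
      (\<forall>i'\<in>act s. card (demand M b (share s) i) \<le> card (demand M b (share s) i')))"

definition iacsm_step :: "nat set \<Rightarrow> (nat \<Rightarrow> nat set \<Rightarrow> real) \<Rightarrow> (nat \<Rightarrow> nat set \<Rightarrow> real) \<Rightarrow> state \<Rightarrow> state" where
  "iacsm_step M b c s =
    (if act s = {} then s else
      (let i = selected M b s;
           Ai = demand M b (share s) i;
           T' = (\<lambda>j. if j \<in> M \<and> j \<notin> Ai then tset s j - {i} else tset s j)
       in \<lparr> act = act s - {i},
            alloc = (alloc s)(i := Ai),
            tset = T',
            share = (\<lambda>j. if j \<in> M \<and> j \<notin> Ai \<and> T' j \<noteq> {}
                         then max (share s j) (c j (T' j) / real (card (T' j)))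
                         else share s j) \<rparr>))"

definition iacsm_init :: "nat \<Rightarrow> (nat \<Rightarrow> nat set \<Rightarrow> real) \<Rightarrow> state" where
  "iacsm_init n c = \<lparr> act = players n, alloc = (\<lambda>_. {}), tset = (\<lambda>_. players n),
      share = (\<lambda>j. c j (players n) / real n) \<rparr>"

text \<open>Final state: the loop runs exactly n iterations (one player removed per iteration).\<close>
definition iacsm_final :: "nat \<Rightarrow> nat \<Rightarrow> (nat \<Rightarrow> nat set \<Rightarrow> real) \<Rightarrow> (nat \<Rightarrow> nat set \<Rightarrow> real) \<Rightarrow> state" where
  "iacsm_final n m b c = (iacsm_step (items m) b c ^^ n) (iacsm_init n c)"

definition iacsm_alloc :: "nat \<Rightarrow> nat \<Rightarrow> (nat \<Rightarrow> nat set \<Rightarrow> real) \<Rightarrow> (nat \<Rightarrow> nat set \<Rightarrow> real) \<Rightarrow> nat \<Rightarrow> nat set" where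
  "iacsm_alloc n m b c = alloc (iacsm_final n m b c)"

definition iacsm_payment :: "nat \<Rightarrow> nat \<Rightarrow> (nat \<Rightarrow> nat set \<Rightarrow> real) \<Rightarrow> (nat \<Rightarrow> nat set \<Rightarrow> real) \<Rightarrow> nat \<Rightarrow> real" where
  "iacsm_payment n m b c i = (\<Sum>j\<in>iacsm_alloc n m b c i. share (iacsm_final n m b c) j)"

end

theory Submission
  imports Defs
begin

definition inv :: "nat \<Rightarrow> nat \<Rightarrow> real \<Rightarrow> (nat \<Rightarrow> nat set \<Rightarrow> real) \<Rightarrow> state \<Rightarrow> bool" where
  "inv n m \<alpha> c s \<longleftrightarrow> act s \<subseteq> players n \<and> (\<forall>i. alloc s i \<subseteq> items m) \<and>
    (\<forall>j\<in>items m. tset s j = {i\<in>players n. i \<in> act s \<or> j \<in> alloc s i}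
       \<and> (tset s j \<noteq> {} \<longrightarrow> c j (tset s j) / real (card (tset s j)) \<le> share s j)
       \<and> (\<forall>S. S \<noteq> {} \<and> S \<subseteq> tset s j \<longrightarrow> share s j \<le> \<alpha> * (c j S / real (card S))))"

lemma selected_in:
  assumes "act s \<noteq> {}"
  shows "selected M b s \<in> act s"
proof -
  obtain i0 where "i0 \<in> act s" using assms by blast
  then obtain x where x: "x \<in> act s" "\<forall>y. y \<in> act s \<longrightarrow> card (demand M b (share s) x) \<le> card (demand M b (share s) y)"
    using ex_has_least_nat[of "\<lambda>i. i \<in> act s" i0 "\<lambda>i. card (demand M b (share s) i)"] by blast
  have "\<exists>i. i \<in> act s \<and> (\<forall>i'\<in>act s. card (demand M b (share s) i) \<le> card (demand M b (share s) i'))"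
    using x by blast
  from LeastI_ex[OF this] show ?thesis unfolding selected_def by blast
qed

lemma demand_sub: "demand M b chi i \<subseteq> M"
  unfolding demand_def cheapest_def by auto

lemma inv_init:
  assumes "\<forall>j\<in>items m. avg_decreasing_on \<alpha> (players n) (c j)"
  shows "inv n m \<alpha> c (iacsm_init n c)"
proof -
  have cn: "card (players n) = n" unfolding players_def by simp
  have up: "\<And>j S. j \<in> items m \<Longrightarrow> S \<noteq> {} \<Longrightarrow> S \<subseteq> players n \<Longrightarrow>
      c j (players n) / real n \<le> \<alpha> * (c j S / real (card S))"
  proof -
    fix j S assume "j \<in> items m" "S \<noteq> {}" "S \<subseteq> players n"
    then show "c j (players n) / real n \<le> \<alpha> * (c j S / real (card S))"
      using assms cn unfolding avg_decreasing_on_def by (metis order_refl)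
  qed
  show ?thesis unfolding inv_def iacsm_init_def
    using up cn by auto
qed

lemma inv_step:
  assumes inv: "inv n m \<alpha> c s"
    and avg: "\<forall>j\<in>items m. avg_decreasing_on \<alpha> (players n) (c j)"
  shows "inv n m \<alpha> c (iacsm_step (items m) b c s)"
proof (cases "act s = {}")
  case True
  then show ?thesis using inv unfolding iacsm_step_def by simp
next
  case False
  define i where "i = selected (items m) b s"
  define Ai where "Ai = demand (items m) b (share s) i"
  define T' where "T' = (\<lambda>j. if j \<in> items m \<and> j \<notin> Ai then tset s j - {i} else tset s j)"
  have iact: "i \<in> act s" unfolding i_def using selected_in[OF False] .
  have AiM: "Ai \<subseteq> items m" unfolding Ai_def by (rule demand_sub)
  have eq: "iacsm_step (items m) b c s = \<lparr> act = act s - {i},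
            alloc = (alloc s)(i := Ai),
            tset = T',
            share = (\<lambda>j. if j \<in> items m \<and> j \<notin> Ai \<and> T' j \<noteq> {}
                         then max (share s j) (c j (T' j) / real (card (T' j)))
                         else share s j) \<rparr>"
    using False unfolding iacsm_step_def Let_def i_def Ai_def T'_def by simp
  have I1: "act s \<subseteq> players n" and I2: "\<forall>i. alloc s i \<subseteq> items m"
    and I3: "\<And>j. j \<in> items m \<Longrightarrow> tset s j = {i\<in>players n. i \<in> act s \<or> j \<in> alloc s i}"
    and I4: "\<And>j. j \<in> items m \<Longrightarrow> tset s j \<noteq> {} \<Longrightarrow> c j (tset s j) / real (card (tset s j)) \<le> share s j"
    and I5: "\<And>j S. j \<in> items m \<Longrightarrow> S \<noteq> {} \<Longrightarrow> S \<subseteq> tset s j \<Longrightarrow> share s j \<le> \<alpha> * (c j S / real (card S))"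
    using inv unfolding inv_def by auto
  have T'sub: "\<And>j. T' j \<subseteq> tset s j" unfolding T'_def by auto
  have T'eq: "\<And>j. j \<in> items m \<Longrightarrow> T' j = {k\<in>players n. k \<in> act s - {i} \<or> j \<in> ((alloc s)(i := Ai)) k}"
  proof -
    fix j assume j: "j \<in> items m"
    show "T' j = {k\<in>players n. k \<in> act s - {i} \<or> j \<in> ((alloc s)(i := Ai)) k}"
      using I3[OF j] j iact I1 unfolding T'_def by auto
  qed
  have tsN: "\<And>j. j \<in> items m \<Longrightarrow> tset s j \<subseteq> players n" using I3 by auto
  define sh where "sh = (\<lambda>j. if j \<in> items m \<and> j \<notin> Ai \<and> T' j \<noteq> {}
                         then max (share s j) (c j (T' j) / real (card (T' j)))
                         else share s j)"
  have eq2: "iacsm_step (items m) b c s = \<lparr> act = act s - {i},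
            alloc = (alloc s)(i := Ai), tset = T', share = sh \<rparr>" using eq unfolding sh_def .
  have P1: "act s - {i} \<subseteq> players n" using I1 by auto
  have P2: "\<forall>k. ((alloc s)(i := Ai)) k \<subseteq> items m" using I2 AiM by auto
  have P4: "\<And>j. j \<in> items m \<Longrightarrow> T' j \<noteq> {} \<Longrightarrow> c j (T' j) / real (card (T' j)) \<le> sh j"
  proof -
    fix j assume j: "j \<in> items m" and ne': "T' j \<noteq> {}"
    show "c j (T' j) / real (card (T' j)) \<le> sh j"
    proof (cases "j \<notin> Ai")
      case True
      then show ?thesis using j ne' by (simp add: sh_def)
    next
      case False
      then have "T' j = tset s j" unfolding T'_def by simp
      then show ?thesis using False I4[OF j] ne' by (simp add: sh_def)
    qed
  qed
  have P5: "\<And>j S. j \<in> items m \<Longrightarrow> S \<noteq> {} \<Longrightarrow> S \<subseteq> T' j \<Longrightarrow> sh j \<le> \<alpha> * (c j S / real (card S))"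
  proof -
    fix j S assume j: "j \<in> items m" and S1: "S \<noteq> {}" and S2: "S \<subseteq> T' j"
    have old: "share s j \<le> \<alpha> * (c j S / real (card S))"
      using I5[OF j S1] S2 T'sub by blast
    have new: "c j (T' j) / real (card (T' j)) \<le> \<alpha> * (c j S / real (card S))"
    proof -
      have A: "\<forall>S T. S \<noteq> {} \<and> S \<subseteq> T \<and> T \<subseteq> players n \<longrightarrow>
      \<alpha> * (c j S / real (card S)) \<ge> c j T / real (card T)"
        using avg j unfolding avg_decreasing_on_def by blast
      have "T' j \<subseteq> players n" using T'sub[of j] tsN[OF j] by blast
      then show ?thesis using A S1 S2 by blast
    qed
    show "sh j \<le> \<alpha> * (c j S / real (card S))"
      using old new by (simp add: sh_def)
  qed
  show ?thesis unfolding eq2 inv_def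
    using P1 P2 T'eq P4 P5 by simp
qed

lemma step_empty: "act s = {} \<Longrightarrow> iacsm_step M b c s = s"
  unfolding iacsm_step_def by simp

lemma step_act: "act s \<noteq> {} \<Longrightarrow> act (iacsm_step M b c s) = act s - {selected M b s}"
  unfolding iacsm_step_def by (simp add: Let_def)

lemma card_act:
  "card (act ((iacsm_step (items m) b c ^^ k) (iacsm_init n c))) = n - k"
proof (induction k)
  case 0
  then show ?case by (simp add: iacsm_init_def players_def)
next
  case (Suc k)
  define s where "s = (iacsm_step (items m) b c ^^ k) (iacsm_init n c)"
  have IH: "card (act s) = n - k" using Suc.IH unfolding s_def .
  have e: "(iacsm_step (items m) b c ^^ Suc k) (iacsm_init n c) = iacsm_step (items m) b c s"
    unfolding s_def by simp
  have "card (act (iacsm_step (items m) b c s)) = n - Suc k"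
  proof (cases "act s = {}")
    case True
    then show ?thesis using IH step_empty[OF True] by simp
  next
    case False
    have x: "selected (items m) b s \<in> act s" using selected_in[OF False] .
    have "act (iacsm_step (items m) b c s) = act s - {selected (items m) b s}"
      using False by (rule step_act)
    then have "card (act (iacsm_step (items m) b c s)) = card (act s) - 1"
      using x card_Diff_singleton_if by metis
    then show ?thesis using IH by simp
  qed
  then show ?case unfolding e .
qed

lemma inv_iter:
  assumes "\<forall>j\<in>items m. avg_decreasing_on \<alpha> (players n) (c j)"
  shows "inv n m \<alpha> c ((iacsm_step (items m) b c ^^ k) (iacsm_init n c))"
proof (induction k)
  case 0
  then show ?case using inv_init[OF assms] by simp
next
  case (Suc k)
  have "inv n m \<alpha> c (iacsm_step (items m) b c ((iacsm_step (items m) b c ^^ k) (iacsm_init n c)))"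
    by (rule inv_step[OF Suc.IH assms])
  then show ?case by simp
qed

theorem mainTheorem8:
  fixes n m :: nat and \<alpha> :: real
    and b :: "nat \<Rightarrow> nat set \<Rightarrow> real" and c :: "nat \<Rightarrow> nat set \<Rightarrow> real"
  assumes alpha: "\<alpha> \<ge> 1"
    and val_nonneg: "\<forall>i\<in>players n. \<forall>S\<subseteq>items m. b i S \<ge> 0"
    and val_mono: "\<forall>i\<in>players n. nondecreasing_on (items m) (b i)"
    and val_sym: "\<forall>i\<in>players n. symmetric_on (items m) (b i)"
    and val_sub: "\<forall>i\<in>players n. submodular_on (items m) (b i)"
    and cost_nonneg: "\<forall>j\<in>items m. \<forall>S\<subseteq>players n. c j S \<ge> 0"
    and cost_empty: "\<forall>j\<in>items m. c j {} = 0"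
    and cost_mono: "\<forall>j\<in>items m. nondecreasing_on (players n) (c j)"
    and cost_avg: "\<forall>j\<in>items m. avg_decreasing_on \<alpha> (players n) (c j)"
  shows "(\<Sum>j\<in>items m. c j {i\<in>players n. j \<in> iacsm_alloc n m b c i})
           \<le> (\<Sum>i\<in>players n. iacsm_payment n m b c i)
       \<and> (\<Sum>i\<in>players n. iacsm_payment n m b c i)
           \<le> \<alpha> * (\<Sum>j\<in>items m. c j {i\<in>players n. j \<in> iacsm_alloc n m b c i})"
proof -
  define s where "s = iacsm_final n m b c"
  have inv: "inv n m \<alpha> c s" unfolding s_def iacsm_final_def using inv_iter[OF cost_avg] .
  have "card (act s) = 0" unfolding s_def iacsm_final_def using card_act[where k=n and n=n] by simp
  moreover have "finite (act s)" using inv unfolding inv_def players_def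
    using finite_subset by blast
  ultimately have actE: "act s = {}" by simp
  define T where "T j = {i\<in>players n. j \<in> alloc s i}" for j
  have allocM: "\<And>i. alloc s i \<subseteq> items m" using inv unfolding inv_def by auto
  have tsT: "\<And>j. j \<in> items m \<Longrightarrow> tset s j = T j" using inv actE unfolding inv_def T_def by auto
  have lo: "\<And>j. j \<in> items m \<Longrightarrow> T j \<noteq> {} \<Longrightarrow> c j (T j) / real (card (T j)) \<le> share s j"
    using inv tsT unfolding inv_def by auto
  have hi: "\<And>j. j \<in> items m \<Longrightarrow> T j \<noteq> {} \<Longrightarrow> share s j \<le> \<alpha> * (c j (T j) / real (card (T j)))"
    using inv tsT unfolding inv_def by auto
  have finT: "\<And>j. finite (T j)" unfolding T_def players_def by auto
  have pay: "(\<Sum>i\<in>players n. iacsm_payment n m b c i) = (\<Sum>j\<in>items m. real (card (T j)) * share s j)"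
  proof -
    have "(\<Sum>i\<in>players n. iacsm_payment n m b c i)
        = (\<Sum>i\<in>players n. \<Sum>j\<in>items m. if j \<in> alloc s i then share s j else 0)"
      unfolding iacsm_payment_def iacsm_alloc_def s_def[symmetric]
      apply (rule sum.cong[OF refl])
      using allocM by (simp add: sum.If_cases items_def Int_absorb1 Int_absorb2 finite_subset)
    also have "\<dots> = (\<Sum>j\<in>items m. \<Sum>i\<in>players n. if j \<in> alloc s i then share s j else 0)"
      by (rule sum.swap)
    also have "\<dots> = (\<Sum>j\<in>items m. real (card (T j)) * share s j)"
      by (rule sum.cong[OF refl]) (simp add: sum.If_cases players_def T_def Int_def)
    finally show ?thesis .
  qed
  have cT: "\<And>j. c j {i\<in>players n. j \<in> iacsm_alloc n m b c i} = c j (T j)"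
    unfolding iacsm_alloc_def s_def[symmetric] T_def by simp
  have L: "\<And>j. j \<in> items m \<Longrightarrow> c j (T j) \<le> real (card (T j)) * share s j"
  proof -
    fix j assume j: "j \<in> items m"
    show "c j (T j) \<le> real (card (T j)) * share s j"
    proof (cases "T j = {}")
      case True then show ?thesis using cost_empty j by simp
    next
      case False
      then have "card (T j) > 0" using finT card_gt_0_iff by blast
      then show ?thesis using lo[OF j False] by (simp add: field_simps)
    qed
  qed
  have H: "\<And>j. j \<in> items m \<Longrightarrow> real (card (T j)) * share s j \<le> \<alpha> * c j (T j)"
  proof -
    fix j assume j: "j \<in> items m"
    show "real (card (T j)) * share s j \<le> \<alpha> * c j (T j)"
    proof (cases "T j = {}")
      case True then show ?thesis using cost_empty j by simp
    next
      case False
      then have "card (T j) > 0" using finT card_gt_0_iff by blast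
      then show ?thesis using hi[OF j False] by (simp add: field_simps)
    qed
  qed
  have s1: "(\<Sum>j\<in>items m. c j (T j)) \<le> (\<Sum>j\<in>items m. real (card (T j)) * share s j)"
    by (rule sum_mono) (rule L)
  have s2: "(\<Sum>j\<in>items m. real (card (T j)) * share s j) \<le> (\<Sum>j\<in>items m. \<alpha> * c j (T j))"
    by (rule sum_mono) (rule H)
  have e1: "\<alpha> * (\<Sum>j\<in>items m. c j (T j)) = (\<Sum>j\<in>items m. \<alpha> * c j (T j))"
    by (rule sum_distrib_left)
  have e2: "(\<Sum>j\<in>items m. c j {i\<in>players n. j \<in> iacsm_alloc n m b c i}) = (\<Sum>j\<in>items m. c j (T j))"
    by (rule sum.cong[OF refl]) (rule cT)
  have g1: "(\<Sum>j\<in>items m. c j {i\<in>players n. j \<in> iacsm_alloc n m b c i}) \<le> (\<Sum>i\<in>players n. iacsm_payment n m b c i)"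
  proof -
    have "(\<Sum>j\<in>items m. c j {i\<in>players n. j \<in> iacsm_alloc n m b c i}) = (\<Sum>j\<in>items m. c j (T j))" by (rule e2)
    also have "\<dots> \<le> (\<Sum>j\<in>items m. real (card (T j)) * share s j)" by (rule s1)
    also have "\<dots> = (\<Sum>i\<in>players n. iacsm_payment n m b c i)" by (rule pay[symmetric])
    finally show ?thesis .
  qed
  have g2: "(\<Sum>i\<in>players n. iacsm_payment n m b c i) \<le> \<alpha> * (\<Sum>j\<in>items m. c j {i\<in>players n. j \<in> iacsm_alloc n m b c i})"
  proof -
    have "(\<Sum>i\<in>players n. iacsm_payment n m b c i) = (\<Sum>j\<in>items m. real (card (T j)) * share s j)" by (rule pay)
    also have "\<dots> \<le> (\<Sum>j\<in>items m. \<alpha> * c j (T j))" by (rule s2)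
    also have "\<dots> = \<alpha> * (\<Sum>j\<in>items m. c j (T j))" by (rule e1[symmetric])
    also have "\<dots> = \<alpha> * (\<Sum>j\<in>items m. c j {i\<in>players n. j \<in> iacsm_alloc n m b c i})" by (simp only: e2)
    finally show ?thesis .
  qed
  show ?thesis by (rule conjI[OF g1 g2])
qed

end
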